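(* Let $D^2=\{z\in\mathbb{C}: |z|\le 1\}$ be the closed unit disk with the Euclidean topology, and take starting points $l=0$ (lion) and $m=1$ (man). Then the man has a strategy in $D^2$. Moreover, there is such a strategy $S:P_0(D^2)\to P_1(D^2)$ for which the man stays on the boundary of the disk during the whole pursuit, i.e. $|S(\beta)(t)|=1$ for all $\beta\in P_0(D^2)$ and all $t\ge 0$.
   Context: For a topological space $X$ and $x\in X$, let $P_x(X)$ be the set of continuous maps $\gamma:[0,+\infty)\to X$ with $\gamma(0)=x$. For $\gamma\in P_x(X)$ and $t\ge 0$, write $\gamma_{<t}=\gamma|_{[0,t)}$ and $\gamma_{\le t}=\gamma|_{[0,t]}$. Given starting points $m$ (man) and $l$ (lion) in $X$, a strategy for the man is a function $S:P_l(X)\to P_m(X)$ such that (i) for each $\beta\in P_l(X)$ and each $t\ge 0$, $S(\beta)(t)\neq\beta(t)$; and (ii) (no-lookahead rule) whenever $\beta,\beta'\in P_l(X)$ and $t\ge0$ satisfy $\beta_{<t}=\beta'_{<t}$, then $S(\beta)_{\le t}=S(\beta')_{\le t}$. No speed bound is imposed on the paths. The Axiom of Choice is assumed. *)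

theory Defs
  imports "HOL-Analysis.Analysis"
begin

text \<open>P_x(X): continuous maps [0,+oo) -> X starting at x. Paths are represented as
total functions real => 'a; only their values on [0,+oo) matter.\<close>
definition paths_from :: "'a topology \<Rightarrow> 'a \<Rightarrow> (real \<Rightarrow> 'a) set" where
  "paths_from X x = {\<gamma>. continuous_map (top_of_set {0..}) X \<gamma> \<and> \<gamma> 0 = x}"

definition man_strategy ::
  "'a topology \<Rightarrow> 'a \<Rightarrow> 'a \<Rightarrow> ((real \<Rightarrow> 'a) \<Rightarrow> (real \<Rightarrow> 'a)) \<Rightarrow> bool" where
  "man_strategy X m l S \<longleftrightarrow>
     (\<forall>\<beta>\<in>paths_from X l. S \<beta> \<in> paths_from X m) \<and>
     (\<forall>\<beta>\<in>paths_from X l. \<forall>t\<ge>0. S \<beta> t \<noteq> \<beta> t) \<and>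
     (\<forall>\<beta>\<in>paths_from X l. \<forall>\<beta>'\<in>paths_from X l. \<forall>t\<ge>0.
        (\<forall>s\<in>{0..<t}. \<beta> s = \<beta>' s) \<longrightarrow> (\<forall>s\<in>{0..t}. S \<beta> s = S \<beta>' s))"

end

theory Submission
  imports Defs
begin

definition Qp :: "nat \<Rightarrow> complex \<Rightarrow> bool" where
  "Qp k z = (if even k then cmod z \<ge> 1/2 else cmod z \<le> 1/4)"

fun Tm :: "(real \<Rightarrow> complex) \<Rightarrow> nat \<Rightarrow> real option" where
  "Tm b 0 = Some 0"
| "Tm b (Suc k) = (case Tm b k of None \<Rightarrow> None | Some a \<Rightarrow>
     if (\<exists>u\<ge>a. Qp k (b u)) then Some (Inf {u. a \<le> u \<and> Qp k (b u)}) else None)"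

definition gg :: "real \<Rightarrow> real" where "gg r = max 0 (min 1 (3 - 4*r))"

definition piece :: "nat \<Rightarrow> complex \<Rightarrow> complex \<Rightarrow> complex \<Rightarrow> complex" where
  "piece k p c z = (if even k then p else - sgn z * cis (Arg (- p / sgn c) * gg (cmod z)))"

fun mm :: "(real \<Rightarrow> complex) \<Rightarrow> nat \<Rightarrow> real \<Rightarrow> complex" where
  "mm b 0 t = 1"
| "mm b (Suc k) t = (case Tm b k of None \<Rightarrow> mm b k t | Some a \<Rightarrow>
     if t \<le> a then mm b k t else piece k (mm b k a) (b a) (b t))"

definition Pk :: "(real \<Rightarrow> complex) \<Rightarrow> nat \<Rightarrow> real \<Rightarrow> bool" where
  "Pk b k t = (case Tm b k of None \<Rightarrow> True | Some a \<Rightarrow> t \<le> a)"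

definition man :: "(real \<Rightarrow> complex) \<Rightarrow> real \<Rightarrow> complex" where
  "man b t = mm b (LEAST k. Pk b k t) t"

lemma Qp_closed:
  fixes b :: "real \<Rightarrow> complex"
  assumes "continuous_on {0..} b" "0 \<le> a"
  shows "closed {u. a \<le> u \<and> Qp k (b u)}"
proof -
  have c: "continuous_on {a..} (\<lambda>u. cmod (b u))"
    by (intro continuous_intros continuous_on_subset[OF assms(1)]) (use assms(2) in auto)
  show ?thesis
  proof (cases "even k")
    case True
    have "{u. a \<le> u \<and> Qp k (b u)} = {a..} \<inter> (\<lambda>u. cmod (b u)) -` {1/2..}"
      using True by (auto simp: Qp_def)
    then show ?thesis using continuous_closed_preimage[OF c] by simp
  next
    case False
    have "{u. a \<le> u \<and> Qp k (b u)} = {a..} \<inter> (\<lambda>u. cmod (b u)) -` {..1/4}"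
      using False by (auto simp: Qp_def)
    then show ?thesis using continuous_closed_preimage[OF c] by simp
  qed
qed

lemma Inf_in:
  fixes b :: "real \<Rightarrow> complex"
  assumes "continuous_on {0..} b" "0 \<le> a" "\<exists>u\<ge>a. Qp k (b u)"
  shows "Inf {u. a \<le> u \<and> Qp k (b u)} \<in> {u. a \<le> u \<and> Qp k (b u)}"
  apply (rule closed_contains_Inf)
  using assms Qp_closed[OF assms(1,2)] by (auto simp: bdd_below_def)

lemma Tm_Suc_ge:
  assumes "continuous_on {0..} b" "Tm b k = Some a" "a \<ge> 0" "Tm b (Suc k) = Some c"
  shows "a \<le> c \<and> Qp k (b c) \<and> (\<forall>u. a \<le> u \<and> u < c \<longrightarrow> \<not> Qp k (b u))"
proof -
  have ex: "\<exists>u\<ge>a. Qp k (b u)" and cdef: "c = Inf {u. a \<le> u \<and> Qp k (b u)}"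
    using assms(2,4) by (simp_all split: if_splits, blast+)
  have "c \<in> {u. a \<le> u \<and> Qp k (b u)}" using Inf_in[OF assms(1,3) ex] cdef by simp
  moreover have "\<forall>u. a \<le> u \<and> u < c \<longrightarrow> \<not> Qp k (b u)"
  proof (intro allI impI)
    fix u assume u: "a \<le> u \<and> u < c"
    show "\<not> Qp k (b u)"
    proof
      assume "Qp k (b u)"
      then have "c \<le> u" unfolding cdef by (intro cInf_lower) (use u in \<open>auto simp: bdd_below_def\<close>)
      with u show False by simp
    qed
  qed
  ultimately show ?thesis by auto
qed

lemma Tm_nonneg:
  assumes "continuous_on {0..} b" shows "Tm b k = Some a \<Longrightarrow> a \<ge> 0"
proof (induction k arbitrary: a)
  case 0 then show ?case by simp
next
  case (Suc k)
  then obtain a' where "Tm b k = Some a'" by (cases "Tm b k") auto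
  moreover have "a' \<ge> 0" using Suc.IH[OF calculation] .
  ultimately show ?case using Tm_Suc_ge[OF assms, of k a' a] Suc.prems by linarith
qed

lemma Tm_None_Suc: "Tm b k = None \<Longrightarrow> Tm b (Suc k) = None" by simp

lemma cl_le:
  fixes f :: "real \<Rightarrow> real"
  assumes "continuous_on {a..b} f" "a < b" "\<forall>t\<in>{a..<b}. f t \<le> c"
  shows "f b \<le> c"
proof -
  have "(f \<longlongrightarrow> f b) (at b within {a..b})"
    using assms(1,2) by (simp add: continuous_on_def)
  then have "(f \<longlongrightarrow> f b) (at b within {a..<b})"
    by (rule tendsto_within_subset) auto
  moreover have "eventually (\<lambda>t. f t \<le> c) (at b within {a..<b})"
    using assms(3) by (auto simp: eventually_at_filter)
  moreover have "\<not> trivial_limit (at b within {a..<b})"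
    using assms(2) by (simp add: trivial_limit_within islimpt_Ico)
  ultimately show ?thesis by (rule tendsto_upperbound)
qed

lemma cl_ge:
  fixes f :: "real \<Rightarrow> real"
  assumes "continuous_on {a..b} f" "a < b" "\<forall>t\<in>{a..<b}. f t \<ge> c"
  shows "f b \<ge> c"
  using cl_le[of a b "\<lambda>t. - f t" "-c"] assms by (auto intro: continuous_intros)

lemma gg_half: "r \<le> 1/2 \<Longrightarrow> gg r = 1" by (simp add: gg_def)
lemma gg_34: "r \<ge> 3/4 \<Longrightarrow> gg r = 0" by (simp add: gg_def)

lemma piece_start:
  assumes "cmod p = 1" "z \<noteq> 0" "cmod z \<le> 1/2"
  shows "piece k p z z = p"
proof (cases "even k")
  case True then show ?thesis by (simp add: piece_def)
next
  case False
  have sz: "sgn z \<noteq> 0" "cmod (sgn z) = 1" using assms(2) by (auto simp: norm_sgn sgn_eq_0_iff)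
  have u: "cmod (- p / sgn z) = 1" using sz assms(1) by (simp add: norm_divide)
  have "cis (Arg (- p / sgn z)) = - p / sgn z"
    using u by (subst cis_Arg) (auto simp: sgn_div_norm)
  then show ?thesis using False sz assms by (simp add: piece_def gg_half)
qed

lemma piece_odd_good:
  assumes "odd k" "z \<noteq> 0"
  shows "cmod (piece k p c z) = 1 \<and> (cmod z \<ge> 3/4 \<longrightarrow> piece k p c z = - sgn z)"
  using assms by (auto simp: piece_def norm_mult norm_sgn gg_34)

lemma piece_cont:
  assumes "continuous_on S b" "\<forall>t\<in>S. b t \<noteq> 0"
  shows "continuous_on S (\<lambda>t. piece k p c (b t))"
proof (cases "even k")
  case True then show ?thesis by (simp add: piece_def)
next
  case False
  have g: "continuous_on S (\<lambda>t. gg (cmod (b t)))"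
    unfolding gg_def by (intro continuous_intros assms(1))
  show ?thesis using False unfolding piece_def
    by (simp, intro continuous_intros g assms)
qed

definition good :: "(real \<Rightarrow> complex) \<Rightarrow> (real \<Rightarrow> complex) \<Rightarrow> real \<Rightarrow> bool" where
  "good b m t = (cmod (m t) = 1 \<and> (cmod (b t) \<ge> 3/4 \<longrightarrow> m t = - sgn (b t)))"

definition Inv :: "(real \<Rightarrow> complex) \<Rightarrow> nat \<Rightarrow> bool" where
  "Inv b k = (case Tm b k of
     None \<Rightarrow> continuous_on {0..} (mm b k) \<and> (\<forall>t\<ge>0. good b (mm b k) t)
   | Some a \<Rightarrow> continuous_on {0..a} (mm b k) \<and> (\<forall>t\<in>{0..a}. good b (mm b k) t) \<and>
        (if even k then cmod (b a) \<le> 1/4 else cmod (b a) = 1/2))"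

lemma Inv_all:
  assumes cb: "continuous_on {0..} b" and b0: "b 0 = 0"
  shows "Inv b k"
proof (induction k)
  case 0
  show ?case by (simp add: Inv_def good_def b0)
next
  case (Suc k)
  show ?case
  proof (cases "Tm b k")
    case None
    then have "mm b (Suc k) = mm b k" by (simp add: fun_eq_iff)
    then show ?thesis using Suc.IH None by (simp add: Inv_def)
  next
    case (Some a)
    have a0: "0 \<le> a" using Tm_nonneg[OF cb Some] .
    have IH: "continuous_on {0..a} (mm b k)" "\<forall>t\<in>{0..a}. good b (mm b k) t"
      "if even k then cmod (b a) \<le> 1/4 else cmod (b a) = 1/2"
      using Suc.IH Some by (auto simp: Inv_def)
    define p where "p = mm b k a"
    define F where "F t = piece k p (b a) (b t)" for t
    have p1: "cmod p = 1" using IH(2) a0 by (auto simp: good_def p_def)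
    have mS: "mm b (Suc k) t = (if t \<le> a then mm b k t else F t)" for t
      using Some by (simp add: F_def p_def)
    have Fa: "F a = p"
    proof (cases "even k")
      case True then show ?thesis by (simp add: F_def piece_def)
    next
      case False
      then have "cmod (b a) = 1/2" using IH(3) by simp
      then have "b a \<noteq> 0" by auto
      then show ?thesis unfolding F_def using piece_start[OF p1, of "b a" k] \<open>cmod (b a) = 1/2\<close> by simp
    qed
    have cbS: "continuous_on S b" if "S \<subseteq> {0..}" for S using continuous_on_subset[OF cb that] .
    have cnb: "continuous_on S (\<lambda>t. cmod (b t))" if "S \<subseteq> {0..}" for S
      by (intro continuous_intros cbS that)
    have Fprops: "continuous_on S F \<and> (\<forall>t\<in>S. good b F t)"
      if S0: "S \<subseteq> {0..}" and Se: "even k \<Longrightarrow> \<forall>t\<in>S. cmod (b t) < 3/4"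
        and So: "odd k \<Longrightarrow> \<forall>t\<in>S. b t \<noteq> 0" for S
    proof (cases "even k")
      case True
      then have "F = (\<lambda>t. p)" by (auto simp: F_def piece_def)
      then show ?thesis using Se True p1 by (auto simp: good_def)
    next
      case False
      have "continuous_on S F" unfolding F_def
        by (rule piece_cont[OF cbS[OF S0]]) (use So False in auto)
      moreover have "\<forall>t\<in>S. good b F t"
        using piece_odd_good[OF False] So False unfolding good_def F_def by blast
      ultimately show ?thesis by blast
    qed
    have contS: "continuous_on {0..c} (mm b (Suc k))"
      if "a \<le> c" "continuous_on {a..c} F" for c
    proof -
      have "continuous_on {0..a} (mm b (Suc k))"
        using IH(1) by (rule continuous_on_eq) (auto simp del: mm.simps simp: mS)
      moreover have "continuous_on {a..c} (mm b (Suc k))"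
        using that(2) by (rule continuous_on_eq) (auto simp del: mm.simps simp: mS Fa p_def)
      ultimately have "continuous_on ({0..a} \<union> {a..c}) (mm b (Suc k))"
        by (intro continuous_on_closed_Un) auto
      moreover have "{0..a} \<union> {a..c} = {0..c}" using a0 that(1) by auto
      ultimately show ?thesis by simp
    qed
    have goodS: "good b (mm b (Suc k)) t"
      if "0 \<le> t" "t \<le> a \<Longrightarrow> good b (mm b k) t" "a < t \<Longrightarrow> good b F t" for t
      using that by (cases "t \<le> a") (auto simp del: mm.simps simp: good_def mS)
    show ?thesis
    proof (cases "\<exists>u\<ge>a. Qp k (b u)")
      case True
      then obtain c where Tc: "Tm b (Suc k) = Some c" using Some by simp
      have cp: "a \<le> c" "Qp k (b c)" "\<forall>u. a \<le> u \<and> u < c \<longrightarrow> \<not> Qp k (b u)"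
        using Tm_Suc_ge[OF cb Some a0 Tc] by auto
      have cn: "continuous_on {a..c} (\<lambda>t. cmod (b t))" using cnb[of "{a..c}"] a0 by auto
      show ?thesis
      proof (cases "even k")
        case True
        have lt: "\<forall>t\<in>{a..<c}. cmod (b t) \<le> 1/2" using cp(3) True by (auto simp: Qp_def)
        have bc: "cmod (b c) \<le> 1/2"
        proof (cases "a < c")
          case True then show ?thesis using cl_le[OF cn True lt] by simp
        next
          case False then have "c = a" using cp(1) by simp
          then show ?thesis using IH(3) \<open>even k\<close> by simp
        qed
        have bc2: "cmod (b c) = 1/2" using bc cp(2) True by (simp add: Qp_def)
        have FP: "continuous_on {a..c} F \<and> (\<forall>t\<in>{a..c}. good b F t)"
        proof (rule Fprops)
          show "{a..c} \<subseteq> {0..}" using a0 by auto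
          show "\<forall>t\<in>{a..c}. cmod (b t) < 3 / 4"
          proof
            fix t assume t: "t \<in> {a..c}"
            show "cmod (b t) < 3/4"
            proof (cases "t = c")
              case True then show ?thesis using bc by simp
            next
              case False
              then have "t \<in> {a..<c}" using t by auto
              then have "cmod (b t) \<le> 1/2" using lt by blast
              then show ?thesis by simp
            qed
          qed
          show "\<forall>t\<in>{a..c}. b t \<noteq> 0" if "odd k" using that True by simp
        qed
        have G: "\<forall>t\<in>{0..c}. good b (mm b (Suc k)) t"
        proof
          fix t assume t: "t \<in> {0..c}"
          show "good b (mm b (Suc k)) t" by (rule goodS) (use t IH(2) FP in auto)
        qed
        have C: "continuous_on {0..c} (mm b (Suc k))" using contS[OF cp(1)] FP by blast
        show ?thesis unfolding Inv_def Tc using C G bc2 True by (simp del: mm.simps)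
      next
        case False
        have lt: "\<forall>t\<in>{a..<c}. cmod (b t) \<ge> 1/4" using cp(3) False by (auto simp: Qp_def)
        have ac: "a < c" using cp IH(3) False by (cases "a = c") (auto simp: Qp_def)
        have bc: "cmod (b c) \<ge> 1/4" using cl_ge[OF cn ac lt] by simp
        have nz: "\<forall>t\<in>{a..c}. b t \<noteq> 0"
        proof
          fix t assume "t \<in> {a..c}"
          then have "cmod (b t) \<ge> 1/4" using lt bc by (cases "t = c") auto
          then show "b t \<noteq> 0" by auto
        qed
        have FP: "continuous_on {a..c} F \<and> (\<forall>t\<in>{a..c}. good b F t)"
          by (rule Fprops) (use a0 nz False in auto)
        have bc2: "cmod (b c) \<le> 1/4" using cp(2) False by (simp add: Qp_def)
        have G: "\<forall>t\<in>{0..c}. good b (mm b (Suc k)) t"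
        proof
          fix t assume t: "t \<in> {0..c}"
          show "good b (mm b (Suc k)) t" by (rule goodS) (use t IH(2) FP in auto)
        qed
        have C: "continuous_on {0..c} (mm b (Suc k))" using contS[OF cp(1)] FP by blast
        show ?thesis unfolding Inv_def Tc using C G bc2 False by (simp del: mm.simps)
      qed
    next
      case False
      then have Tc: "Tm b (Suc k) = None" using Some by simp
      have nq: "\<forall>t\<ge>a. \<not> Qp k (b t)" using False by auto
      have FP: "continuous_on {a..} F \<and> (\<forall>t\<in>{a..}. good b F t)"
      proof (rule Fprops)
        show "{a..} \<subseteq> {0..}" using a0 by auto
        show "\<forall>t\<in>{a..}. cmod (b t) < 3 / 4" if "even k"
        proof
          fix t assume "t \<in> {a..}"
          then have "\<not> Qp k (b t)" using nq by simp
          then show "cmod (b t) < 3/4" using that by (simp add: Qp_def)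
        qed
        show "\<forall>t\<in>{a..}. b t \<noteq> 0" if "odd k"
        proof
          fix t assume "t \<in> {a..}"
          then have "\<not> Qp k (b t)" using nq by simp
          then have "cmod (b t) > 1/4" using that by (simp add: Qp_def)
          then show "b t \<noteq> 0" by auto
        qed
      qed
      have "continuous_on {0..a} (mm b (Suc k))"
        using IH(1) by (rule continuous_on_eq) (auto simp del: mm.simps simp: mS)
      moreover have "continuous_on {a..} (mm b (Suc k))"
      proof (rule continuous_on_eq[of _ F])
        show "continuous_on {a..} F" using FP by blast
        fix x assume "x \<in> {a..}"
        then show "F x = mm b (Suc k) x" by (cases "x = a") (auto simp del: mm.simps simp: mS Fa p_def)
      qed
      ultimately have "continuous_on ({0..a} \<union> {a..}) (mm b (Suc k))"
        by (intro continuous_on_closed_Un) auto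
      moreover have "{0..a} \<union> {a..} = {0..}" using a0 by auto
      ultimately have C: "continuous_on {0..} (mm b (Suc k))" by simp
      have G: "\<forall>t\<ge>0. good b (mm b (Suc k)) t"
      proof (intro allI impI)
        fix t :: real assume t: "0 \<le> t"
        show "good b (mm b (Suc k)) t" by (rule goodS) (use t IH(2) FP in auto)
      qed
      show ?thesis unfolding Inv_def Tc using C G by (simp del: mm.simps)
    qed
  qed
qed

lemma Inv_Some: "Inv b k \<Longrightarrow> Tm b k = Some a \<Longrightarrow> (if even k then cmod (b a) \<le> 1/4 else cmod (b a) = 1/2)"
  unfolding Inv_def by (auto simp del: mm.simps split: if_splits)

lemma Tm_step:
  assumes cb: "continuous_on {0..} b" "Tm b k = Some a"
  shows "Tm b (Suc k) = None \<or> (\<exists>c. Tm b (Suc k) = Some c \<and> a \<le> c)"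
proof (cases "Tm b (Suc k)")
  case (Some c)
  then show ?thesis using Tm_Suc_ge[OF cb(1) assms(2) Tm_nonneg[OF cb(1) assms(2)] Some] by auto
qed auto

lemma Pk_stable:
  assumes cb: "continuous_on {0..} b" and P: "Pk b k t"
  shows "k \<le> j \<Longrightarrow> Pk b j t \<and> mm b j t = mm b k t"
proof (induction j)
  case 0 then show ?case using P by simp
next
  case (Suc j)
  show ?case
  proof (cases "k = Suc j")
    case True then show ?thesis using P by simp
  next
    case False
    then have IH: "Pk b j t" "mm b j t = mm b k t" using Suc by auto
    show ?thesis
    proof (cases "Tm b j")
      case None
      then show ?thesis using IH by (simp add: Pk_def)
    next
      case (Some a)
      then have ta: "t \<le> a" using IH(1) by (simp add: Pk_def)
      have "Pk b (Suc j) t" using Tm_step[OF cb Some] ta by (auto simp: Pk_def)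
      moreover have "mm b (Suc j) t = mm b j t" using Some ta by simp
      ultimately show ?thesis using IH by simp
    qed
  qed
qed

lemma Pk_exists:
  assumes cb: "continuous_on {0..} b" and b0: "b 0 = 0"
  shows "\<exists>k. Pk b k t"
proof (rule ccontr)
  assume "\<not> (\<exists>k. Pk b k t)"
  then have nP: "\<And>k. \<not> Pk b k t" by blast
  have ex: "\<exists>a. Tm b k = Some a \<and> a < t" for k
    using nP[of k] by (cases "Tm b k") (auto simp: Pk_def)
  define x where "x k = the (Tm b k)" for k
  have xT: "Tm b k = Some (x k)" "x k < t" for k using ex[of k] by (auto simp: x_def)
  have x0: "x k \<ge> 0" for k using Tm_nonneg[OF cb xT(1)] .
  have inc: "incseq x"
  proof (rule incseq_SucI)
    fix k show "x k \<le> x (Suc k)" using Tm_step[OF cb xT(1)[of k]] xT(1)[of "Suc k"] by auto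
  qed
  have bdd: "bdd_above (range x)" using xT(2) by (auto simp: bdd_above_def intro: less_imp_le)
  define L where "L = (SUP i. x i)"
  have lim: "x \<longlonglongrightarrow> L" unfolding L_def by (rule LIMSEQ_incseq_SUP[OF bdd inc])
  have L0: "L \<ge> 0" using x0[of 0] cSUP_upper[OF _ bdd, of 0] unfolding L_def by simp
  have fc: "continuous_on {0..} (\<lambda>u. cmod (b u))" by (intro continuous_intros cb)
  have flim: "(\<lambda>k. cmod (b (x k))) \<longlonglongrightarrow> cmod (b L)"
    by (rule continuous_on_tendsto_compose[OF fc lim]) (use L0 x0 in auto)
  have dlim: "(\<lambda>k. cmod (b (x (Suc k))) - cmod (b (x k))) \<longlonglongrightarrow> 0"
    using tendsto_diff[OF LIMSEQ_Suc[OF flim] flim] by simp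
  then have alim: "(\<lambda>k. \<bar>cmod (b (x (Suc k))) - cmod (b (x k))\<bar>) \<longlonglongrightarrow> 0"
    using tendsto_rabs[OF dlim] by simp
  have ph: "if even k then cmod (b (x k)) \<le> 1/4 else cmod (b (x k)) = 1/2" for k
    by (rule Inv_Some[OF Inv_all[OF cb b0] xT(1)])
  have ge: "\<bar>cmod (b (x (Suc k))) - cmod (b (x k))\<bar> \<ge> 1/4" for k
    using ph[of k] ph[of "Suc k"] by (cases "even k") auto
  have "(0::real) \<ge> 1/4"
    by (rule tendsto_lowerbound[OF alim]) (use ge in auto)
  then show False by simp
qed

lemma man_eq:
  assumes cb: "continuous_on {0..} b" and P: "Pk b k t"
  shows "man b t = mm b k t"
proof -
  define j where "j = (LEAST k. Pk b k t)"
  have Pj: "Pk b j t" unfolding j_def using P by (rule LeastI)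
  have "j \<le> k" unfolding j_def using P by (rule Least_le)
  then have "mm b k t = mm b j t" using Pk_stable[OF cb Pj] by blast
  then show ?thesis by (simp add: man_def j_def)
qed

lemma Pk_le: "Pk b k t \<Longrightarrow> s \<le> t \<Longrightarrow> Pk b k s"
  by (cases "Tm b k") (auto simp: Pk_def)

lemma man_good:
  assumes cb: "continuous_on {0..} b" and b0: "b 0 = 0" and t: "0 \<le> t"
  shows "good b (man b) t"
proof -
  obtain k where P: "Pk b k t" using Pk_exists[OF cb b0] by blast
  have I: "Inv b k" by (rule Inv_all[OF cb b0])
  have "good b (mm b k) t"
  proof (cases "Tm b k")
    case None then show ?thesis using I t by (simp add: Inv_def del: mm.simps)
  next
    case (Some a) then have "t \<le> a" using P by (simp add: Pk_def)
    then show ?thesis using I t Some by (simp add: Inv_def del: mm.simps)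
  qed
  then show ?thesis using man_eq[OF cb P] by (simp add: good_def)
qed

lemma man_cont_on:
  assumes cb: "continuous_on {0..} b" and b0: "b 0 = 0"
  shows "continuous_on {0..N} (man b)"
proof -
  obtain k where P: "Pk b k N" using Pk_exists[OF cb b0] by blast
  have I: "Inv b k" by (rule Inv_all[OF cb b0])
  have "continuous_on {0..N} (mm b k)"
  proof (cases "Tm b k")
    case None then show ?thesis using I by (auto simp add: Inv_def simp del: mm.simps intro: continuous_on_subset)
  next
    case (Some a) then have "N \<le> a" using P by (simp add: Pk_def)
    then show ?thesis using I Some
      by (auto simp add: Inv_def simp del: mm.simps intro: continuous_on_subset)
  qed
  then show ?thesis
    by (rule continuous_on_eq) (use man_eq[OF cb Pk_le[OF P]] in auto)
qed

lemma man_cont: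
  assumes cb: "continuous_on {0..} b" and b0: "b 0 = 0"
  shows "continuous_on {0..} (man b)"
  unfolding continuous_on_eq_continuous_within
proof
  fix x :: real assume x: "x \<in> {0..}"
  have "continuous_on {0..x+1} (man b)" by (rule man_cont_on[OF cb b0])
  then have c: "continuous (at x within {0..x+1}) (man b)"
    using x by (simp add: continuous_on_eq_continuous_within)
  have "at x within {0..} = at x within {0..x+1}"
    by (rule at_within_nhd[of _ "{..<x+1}"]) auto
  then show "continuous (at x within {0..}) (man b)" using c by simp
qed

lemma mm_0: "continuous_on {0..} b \<Longrightarrow> mm b k 0 = 1"
proof (induction k)
  case (Suc k)
  then show ?case
    by (cases "Tm b k") (auto dest: Tm_nonneg[OF Suc.prems])
qed simp

lemma man_0: "continuous_on {0..} b \<Longrightarrow> b 0 = 0 \<Longrightarrow> man b 0 = 1"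
  using Pk_exists[of b 0] man_eq[of b] mm_0[of b] by metis

definition beyond :: "real \<Rightarrow> real option \<Rightarrow> bool" where
  "beyond t X = (case X of None \<Rightarrow> True | Some a \<Rightarrow> t < a)"

lemma beyond_Suc:
  assumes cb: "continuous_on {0..} b" and "beyond t (Tm b k)"
  shows "beyond t (Tm b (Suc k))"
proof (cases "Tm b k")
  case None then show ?thesis by (simp add: beyond_def)
next
  case (Some a)
  then show ?thesis using Tm_step[OF cb Some] assms(2) by (auto simp: beyond_def simp del: Tm.simps)
qed

lemma mm_beyond:
  assumes "beyond t (Tm b k)" "s \<le> t"
  shows "mm b (Suc k) s = mm b k s"
  using assms by (cases "Tm b k") (auto simp: beyond_def)

lemma causal_k:
  assumes cb: "continuous_on {0..} b" and cb': "continuous_on {0..} b'"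
    and t: "0 \<le> t" and eq: "\<forall>s\<in>{0..t}. b s = b' s"
  shows "(Tm b k = Tm b' k \<or> (beyond t (Tm b k) \<and> beyond t (Tm b' k))) \<and>
         (\<forall>s\<in>{0..t}. mm b k s = mm b' k s)"
proof (induction k)
  case 0 then show ?case by simp
next
  case (Suc k)
  have IHm: "\<forall>s\<in>{0..t}. mm b k s = mm b' k s" using Suc by blast
  show ?case
  proof (cases "beyond t (Tm b k) \<and> beyond t (Tm b' k)")
    case True
    then show ?thesis using beyond_Suc[OF cb] beyond_Suc[OF cb'] mm_beyond IHm
      by (simp del: mm.simps) (metis atLeastAtMost_iff)
  next
    case False
    then have same: "Tm b k = Tm b' k" using Suc by blast
    show ?thesis
    proof (cases "Tm b k")
      case None
      then show ?thesis using same IHm by simp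
    next
      case (Some a)
      have Some': "Tm b' k = Some a" using same Some by simp
      have at: "a \<le> t" using False Some Some' by (auto simp: beyond_def)
      have a0: "0 \<le> a" using Tm_nonneg[OF cb Some] .
      have mmeq: "\<forall>s\<in>{0..t}. mm b (Suc k) s = mm b' (Suc k) s"
      proof
        fix s assume s: "s \<in> {0..t}"
        show "mm b (Suc k) s = mm b' (Suc k) s"
        proof (cases "s \<le> a")
          case True then show ?thesis using Some Some' IHm s by simp
        next
          case False
          have "mm b k a = mm b' k a" using IHm a0 at by simp
          moreover have "b a = b' a" "b s = b' s" using eq a0 at s by auto
          ultimately show ?thesis using Some Some' False by simp
        qed
      qed
      have Teq: "Tm b (Suc k) = Tm b' (Suc k) \<or> (beyond t (Tm b (Suc k)) \<and> beyond t (Tm b' (Suc k)))"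
      proof (cases "\<exists>u. a \<le> u \<and> u \<le> t \<and> Qp k (b u)")
        case True
        then obtain u where u: "a \<le> u" "u \<le> t" "Qp k (b u)" by blast
        have u': "Qp k (b' u)" using u eq a0 by auto
        define A where "A = {u. a \<le> u \<and> Qp k (b u)}"
        define A' where "A' = {u. a \<le> u \<and> Qp k (b' u)}"
        have e1: "\<exists>u\<ge>a. Qp k (b u)" "\<exists>u\<ge>a. Qp k (b' u)" using u u' by auto
        have T1: "Tm b (Suc k) = Some (Inf A)" using Some e1(1) by (simp add: A_def)
        have T2: "Tm b' (Suc k) = Some (Inf A')" using Some' e1(2) by (simp add: A'_def)
        have iA: "Inf A \<in> A" unfolding A_def by (rule Inf_in[OF cb a0 e1(1)])
        have iA': "Inf A' \<in> A'" unfolding A'_def by (rule Inf_in[OF cb' a0 e1(2)])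
        have bA: "bdd_below A" "bdd_below A'" by (auto simp: A_def A'_def bdd_below_def)
        have "Inf A \<le> u" using u bA by (intro cInf_lower) (auto simp: A_def)
        then have "Inf A \<in> A'" using iA eq a0 u(2) by (auto simp: A_def A'_def)
        then have le1: "Inf A' \<le> Inf A" using bA by (intro cInf_lower)
        then have "Inf A' \<in> A" using iA' eq a0 u(2) \<open>Inf A \<le> u\<close> by (auto simp: A_def A'_def)
        then have "Inf A \<le> Inf A'" using bA by (intro cInf_lower)
        then show ?thesis using le1 T1 T2 by simp
      next
        case False
        have nq: "\<forall>u. a \<le> u \<and> u \<le> t \<longrightarrow> \<not> Qp k (b u) \<and> \<not> Qp k (b' u)"
          using False eq a0 by auto
        have "beyond t (Tm b (Suc k))"
        proof (cases "Tm b (Suc k)")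
          case (Some c)
          have "a \<le> c \<and> Qp k (b c)" using Tm_Suc_ge[OF cb \<open>Tm b k = Some a\<close> a0 Some] by blast
          then show ?thesis using nq Some by (auto simp: beyond_def not_le[symmetric])
        qed (simp add: beyond_def)
        moreover have "beyond t (Tm b' (Suc k))"
        proof (cases "Tm b' (Suc k)")
          case (Some c)
          have "a \<le> c \<and> Qp k (b' c)" using Tm_Suc_ge[OF cb' Some' a0 Some] by blast
          then show ?thesis using nq Some by (auto simp: beyond_def not_le[symmetric])
        qed (simp add: beyond_def)
        ultimately show ?thesis by blast
      qed
      show ?thesis using Teq mmeq by blast
    qed
  qed
qed

lemma causal:
  assumes cb: "continuous_on {0..} b" and cb': "continuous_on {0..} b'"
    and b0: "b 0 = 0" and b0': "b' 0 = 0"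
    and t: "0 \<le> t" and eq: "\<forall>s\<in>{0..t}. b s = b' s" and s: "s \<in> {0..t}"
  shows "man b s = man b' s"
proof -
  obtain k where k: "Pk b k t" using Pk_exists[OF cb b0] by blast
  obtain k' where k': "Pk b' k' t" using Pk_exists[OF cb' b0'] by blast
  define K where "K = max k k'"
  have P1: "Pk b K t" using Pk_stable[OF cb k, of K] by (simp add: K_def)
  have P2: "Pk b' K t" using Pk_stable[OF cb' k', of K] by (simp add: K_def)
  have "man b s = mm b K s" using man_eq[OF cb Pk_le[OF P1]] s by simp
  also have "\<dots> = mm b' K s" using causal_k[OF cb cb' t eq] s by blast
  also have "\<dots> = man b' s" using man_eq[OF cb' Pk_le[OF P2]] s by simp
  finally show ?thesis .
qed

lemma paths_fromD:
  assumes "\<beta> \<in> paths_from (top_of_set (cball (0::complex) 1)) x"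
  shows "continuous_on {0..} \<beta>" "\<forall>t\<ge>0. \<beta> t \<in> cball 0 1" "\<beta> 0 = x"
  using assms by (auto simp: paths_from_def Pi_def)

lemma strat:
  "man_strategy (top_of_set (cball (0::complex) 1)) 1 0 man \<and>
   (\<forall>\<beta>\<in>paths_from (top_of_set (cball (0::complex) 1)) 0. \<forall>t\<ge>0. cmod (man \<beta> t) = 1)"
proof -
  have G: "good \<beta> (man \<beta>) t" if "\<beta> \<in> paths_from (top_of_set (cball (0::complex) 1)) 0" "0 \<le> t" for \<beta> t
    using man_good[OF paths_fromD(1)[OF that(1)] paths_fromD(3)[OF that(1)] that(2)] .
  have P1: "man \<beta> \<in> paths_from (top_of_set (cball (0::complex) 1)) 1"
    if b: "\<beta> \<in> paths_from (top_of_set (cball (0::complex) 1)) 0" for \<beta>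
  proof -
    have c: "continuous_on {0..} (man \<beta>)" by (rule man_cont[OF paths_fromD(1,3)[OF b]])
    have "man \<beta> t \<in> cball 0 1" if "t \<in> {0..}" for t using G[OF b, of t] that by (auto simp: good_def)
    moreover have "man \<beta> 0 = 1" by (rule man_0[OF paths_fromD(1,3)[OF b]])
    ultimately show ?thesis using c by (auto simp: paths_from_def Pi_def)
  qed
  have P2: "man \<beta> t \<noteq> \<beta> t"
    if b: "\<beta> \<in> paths_from (top_of_set (cball (0::complex) 1)) 0" and t: "0 \<le> t" for \<beta> t
  proof
    assume e: "man \<beta> t = \<beta> t"
    have g: "cmod (man \<beta> t) = 1" "cmod (\<beta> t) \<ge> 3/4 \<longrightarrow> man \<beta> t = - sgn (\<beta> t)"
      using G[OF b t] by (auto simp: good_def)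
    then have n1: "cmod (\<beta> t) = 1" using e by simp
    then have "\<beta> t = - sgn (\<beta> t)" using g e by simp
    also have "sgn (\<beta> t) = \<beta> t" using n1 by (simp add: sgn_div_norm)
    finally have "\<beta> t = 0" by simp
    then show False using n1 by simp
  qed
  have P3: "\<forall>s\<in>{0..t}. man \<beta> s = man \<beta>' s"
    if b: "\<beta> \<in> paths_from (top_of_set (cball (0::complex) 1)) 0"
      and b': "\<beta>' \<in> paths_from (top_of_set (cball (0::complex) 1)) 0"
      and t: "0 \<le> t" and eq: "\<forall>s\<in>{0..<t}. \<beta> s = \<beta>' s" for \<beta> \<beta>' t
  proof -
    note cb = paths_fromD(1)[OF b] and cb' = paths_fromD(1)[OF b']
    have eqt: "\<beta> t = \<beta>' t"
    proof (cases "t = 0")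
      case True then show ?thesis using paths_fromD(3)[OF b] paths_fromD(3)[OF b'] by simp
    next
      case False
      then have tp: "0 < t" using t by simp
      have "continuous_on {0..t} (\<lambda>s. cmod (\<beta> s - \<beta>' s))"
        by (intro continuous_intros continuous_on_subset[OF cb] continuous_on_subset[OF cb']) auto
      from cl_le[OF this tp, of 0] eq have "cmod (\<beta> t - \<beta>' t) \<le> 0" by simp
      then show ?thesis by simp
    qed
    have eq2: "\<forall>s\<in>{0..t}. \<beta> s = \<beta>' s"
      using eq eqt by (metis atLeastAtMost_iff atLeastLessThan_iff order_less_le)
    show ?thesis using causal[OF cb cb' paths_fromD(3)[OF b] paths_fromD(3)[OF b'] t eq2] by blast
  qed
  have P4: "\<forall>\<beta>\<in>paths_from (top_of_set (cball (0::complex) 1)) 0. \<forall>t\<ge>0. cmod (man \<beta> t) = 1"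
    using G unfolding good_def by blast
  show ?thesis unfolding man_strategy_def
    apply (intro conjI P4)
      apply (intro ballI, rule P1, assumption)
     apply (intro ballI allI impI, rule P2; assumption)
    using P3 by blast
qed

theorem mainTheorem8:
  shows "(\<exists>S. man_strategy (top_of_set (cball (0::complex) 1)) 1 0 S) \<and>
         (\<exists>S. man_strategy (top_of_set (cball (0::complex) 1)) 1 0 S \<and>
              (\<forall>\<beta>\<in>paths_from (top_of_set (cball (0::complex) 1)) 0. \<forall>t\<ge>0. cmod (S \<beta> t) = 1))"
  using strat by blast

end
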